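(* Let $1\le k\le n-1$ and let $\Sigma=\mathbb{S}^k\times\mathbb{R}^{n-k}\subset\mathbb{R}^{n+1}$ be a self-shrinker. Let $C\subset\mathbb{S}^k$ be an open hemisphere (the intersection of $\mathbb{S}^k$ with an open half-space of $\mathbb{R}^{k+1}$ bounded by a hyperplane through the origin), and let $H\subset\mathbb{R}^{n-k}$ be an open half-space whose boundary is an $(n-k-1)$-dimensional linear subspace. Then $C\times H\subset\Sigma$ is stable.
   Context: $\mathbb{S}^k$ is the round sphere of radius $\sqrt{2k}$ centered at the origin of $\mathbb{R}^{k+1}$. Stability operator: $Lf=\Delta f-\tfrac12\langle\vec x,\nabla f\rangle+(|A|^2+\tfrac12)f$. A region $\Omega$ is stable if there is a function $u$ with $Lu=0$ and $u>0$ on $\Omega$. *)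

theory Defs
  imports "HOL-Analysis.Analysis"
begin

text \<open>Ambient space R^{n+1} = R^{k+1} x R^{n-k}, points (y, z) with
  y :: real^'a (CARD('a) = k+1) and z :: real^'b (CARD('b) = n-k).\<close>

definition shr_k :: "'a::finite itself \<Rightarrow> nat" where
  "shr_k _ = CARD('a) - 1"

definition shr_radius :: "'a::finite itself \<Rightarrow> real" where
  "shr_radius A = sqrt (2 * real (shr_k A))"

definition Sigma :: "((real^'a::finite) \<times> (real^'b::finite)) set" where
  "Sigma = {(y, z). norm y = shr_radius TYPE('a)}"

definition dd :: "('v::real_normed_vector \<Rightarrow> real) \<Rightarrow> 'v \<Rightarrow> 'v \<Rightarrow> real" where
  "dd F p v = deriv (\<lambda>t. F (p + t *\<^sub>R v)) 0"

definition eucl_laplacian :: "('v::euclidean_space \<Rightarrow> real) \<Rightarrow> 'v \<Rightarrow> real" where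
  "eucl_laplacian F p = (\<Sum>b\<in>Basis. dd (\<lambda>q. dd F q b) p b)"

text \<open>Extension of a function on Sigma, constant along the normal lines
  (0-homogeneous in the sphere factor).  For such an extension F one has
  nabla_Sigma f = nabla F and Delta_Sigma f = Delta F on Sigma.\<close>
definition hext :: "((real^'a::finite) \<times> (real^'b::finite) \<Rightarrow> real)
    \<Rightarrow> (real^'a) \<times> (real^'b) \<Rightarrow> real" where
  "hext u = (\<lambda>(y, z). u ((shr_radius TYPE('a) / norm y) *\<^sub>R y, z))"

text \<open>Unit normal field of Sigma, extended 0-homogeneously; |A|^2 is the
  squared Hilbert-Schmidt norm of its differential (the shape operator).\<close>
definition shr_normal :: "(real^'a::finite) \<times> (real^'b::finite) \<Rightarrow> (real^'a) \<times> (real^'b)" where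
  "shr_normal = (\<lambda>(y, z). ((1 / norm y) *\<^sub>R y, 0))"

definition sqA :: "(real^'a::finite) \<times> (real^'b::finite) \<Rightarrow> real" where
  "sqA p = (\<Sum>b\<in>Basis. (norm (frechet_derivative shr_normal (at p) b))\<^sup>2)"

definition stab_op :: "((real^'a::finite) \<times> (real^'b::finite) \<Rightarrow> real)
    \<Rightarrow> (real^'a) \<times> (real^'b) \<Rightarrow> real" where
  "stab_op u p = eucl_laplacian (hext u) p - 1/2 * dd (hext u) p p
                 + (sqA p + 1/2) * u p"

definition twice_diff_on :: "'v set \<Rightarrow> ('v::euclidean_space \<Rightarrow> real) \<Rightarrow> bool" where
  "twice_diff_on N F \<longleftrightarrow> (\<forall>p\<in>N. F differentiable (at p)) \<and>
     (\<forall>v. \<forall>p\<in>N. (\<lambda>q. frechet_derivative F (at q) v) differentiable (at p))"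

text \<open>Open neighbourhood in R^{n+1} of a region of Sigma, obtained by moving
  along normal lines.\<close>
definition normal_nbhd :: "((real^'a::finite) \<times> (real^'b::finite)) set \<Rightarrow> ((real^'a) \<times> (real^'b)) set" where
  "normal_nbhd \<Omega> = {(y, z). y \<noteq> 0 \<and> ((shr_radius TYPE('a) / norm y) *\<^sub>R y, z) \<in> \<Omega>}"

definition stable_region :: "((real^'a::finite) \<times> (real^'b::finite)) set \<Rightarrow> bool" where
  "stable_region \<Omega> \<longleftrightarrow> (\<exists>u. twice_diff_on (normal_nbhd \<Omega>) (hext u) \<and>
       (\<forall>p\<in>\<Omega>. stab_op u p = 0 \<and> u p > 0))"

end

theory Submission imports Defs begin

lemma nfst_deriv[derivative_intros]:
  fixes q :: "'a::euclidean_space \<times> 'b::euclidean_space"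
  assumes "fst q \<noteq> 0"
  shows "((\<lambda>q. norm (fst q)) has_derivative (\<lambda>h. (fst q \<bullet> fst h) / norm (fst q))) (at q within S)"
proof -
  have "((\<lambda>q. norm (fst q)) has_derivative (\<lambda>h. fst h \<bullet> sgn (fst q))) (at q within S)"
    using has_derivative_compose[OF has_derivative_fst[OF has_derivative_ident] has_derivative_norm[OF assms]]
    by (simp add: o_def has_derivative_at_withinI)
  then show ?thesis by (simp add: sgn_div_norm inner_commute divide_inverse mult.commute)
qed

definition FF :: "real \<Rightarrow> 'a::euclidean_space \<Rightarrow> 'b::euclidean_space \<Rightarrow> 'a \<times> 'b \<Rightarrow> real" where
  "FF r a b q = r * (a \<bullet> fst q) * (b \<bullet> snd q) / norm (fst q)"

definition Fd :: "real \<Rightarrow> 'a::euclidean_space \<Rightarrow> 'b::euclidean_space \<Rightarrow> 'a \<times> 'b \<Rightarrow> 'a \<times> 'b \<Rightarrow> real" where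
  "Fd r a b q h = r * ((a \<bullet> fst h) * (b \<bullet> snd q) / norm (fst q) + (a \<bullet> fst q) * (b \<bullet> snd h) / norm (fst q)
     - (a \<bullet> fst q) * (b \<bullet> snd q) * (fst q \<bullet> fst h) / norm (fst q) ^ 3)"

definition Fdd :: "real \<Rightarrow> 'a::euclidean_space \<Rightarrow> 'b::euclidean_space \<Rightarrow> 'a \<times> 'b \<Rightarrow> 'a \<times> 'b \<Rightarrow> 'a \<times> 'b \<Rightarrow> real" where
  "Fdd r a b q v w = r * ((a \<bullet> fst v) * (b \<bullet> snd w) / norm (fst q)
     - (a \<bullet> fst v) * (b \<bullet> snd q) * (fst q \<bullet> fst w) / norm (fst q) ^ 3
     + (a \<bullet> fst w) * (b \<bullet> snd v) / norm (fst q)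
     - (a \<bullet> fst q) * (b \<bullet> snd v) * (fst q \<bullet> fst w) / norm (fst q) ^ 3
     - ((a \<bullet> fst w) * (b \<bullet> snd q) * (fst q \<bullet> fst v) + (a \<bullet> fst q) * (b \<bullet> snd w) * (fst q \<bullet> fst v)
        + (a \<bullet> fst q) * (b \<bullet> snd q) * (fst w \<bullet> fst v)) / norm (fst q) ^ 3
     + 3 * (a \<bullet> fst q) * (b \<bullet> snd q) * (fst q \<bullet> fst v) * (fst q \<bullet> fst w) / norm (fst q) ^ 5)"

lemma FF_deriv:
  assumes "fst q \<noteq> 0"
  shows "(FF r a b has_derivative Fd r a b q) (at q)"
  unfolding FF_def[abs_def] Fd_def[abs_def]
  apply (rule derivative_eq_intros refl | simp add: assms)+
  using assms apply (auto simp: fun_eq_iff field_simps power3_eq_cube)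
  done

lemma Fd_deriv:
  assumes "fst q \<noteq> 0"
  shows "((\<lambda>q. Fd r a b q v) has_derivative Fdd r a b q v) (at q)"
  unfolding Fdd_def[abs_def] Fd_def[abs_def]
  apply (rule derivative_eq_intros refl | simp add: assms)+
  using assms apply (auto simp: fun_eq_iff field_simps eval_nat_numeral)
  done
lemma dd_deriv:
  assumes "(f has_derivative f') (at p)"
  shows "dd f p v = f' v"
proof -
  have lin: "linear f'" using assms has_derivative_linear by blast
  have d1: "((\<lambda>t::real. p + t *\<^sub>R v) has_derivative (\<lambda>t. t *\<^sub>R v)) (at 0)"
    by (rule derivative_eq_intros refl)+ simp
  have d2: "(f has_derivative f') (at (p + (0::real) *\<^sub>R v))" using assms by simp
  have "((\<lambda>t. f (p + t *\<^sub>R v)) has_derivative (\<lambda>t. f' (t *\<^sub>R v))) (at (0::real))"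
    using has_derivative_compose[OF d1 d2] by (simp add: o_def)
  moreover have "(\<lambda>t. f' (t *\<^sub>R v)) = (*) (f' v)"
    using lin by (auto simp: linear_scale fun_eq_iff)
  ultimately have "((\<lambda>t. f (p + t *\<^sub>R v)) has_field_derivative f' v) (at 0)"
    by (simp add: has_field_derivative_def mult.commute)
  then show ?thesis unfolding dd_def by (rule DERIV_imp_deriv)
qed

lemma dd2_deriv:
  assumes "open U" "p \<in> U" "\<And>q. q \<in> U \<Longrightarrow> (f has_derivative f' q) (at q)"
    and "((\<lambda>q. f' q v) has_derivative g) (at p)"
  shows "dd (\<lambda>q. dd f q v) p w = g w"
proof -
  have "((\<lambda>q. dd f q v) has_derivative g) (at p)"
    by (rule has_derivative_transform_within_open[OF assms(4) assms(1,2)])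
       (metis dd_deriv assms(3))
  then show ?thesis by (rule dd_deriv)
qed

lemma openU: "open {q::'a::euclidean_space \<times> 'b::euclidean_space. fst q \<noteq> 0}"
proof -
  have "{q::'a \<times> 'b. fst q \<noteq> 0} = fst -` (- {0})" by auto
  then show ?thesis by (metis open_vimage_fst open_Compl closed_singleton)
qed

lemma sum_Basis_prod:
  fixes f :: "('a::euclidean_space \<times> 'b::euclidean_space) \<Rightarrow> real"
  shows "sum f Basis = sum (\<lambda>i. f (i, 0)) Basis + sum (\<lambda>i. f (0, i)) Basis"
proof -
  have "inj_on (\<lambda>u. (u::'a, 0::'b)) Basis" "inj_on (\<lambda>u. (0::'a, u::'b)) Basis"
    by (auto intro!: inj_onI Pair_inject)
  thus ?thesis
    unfolding Basis_prod_def
    by (subst sum.union_disjoint) (auto simp: Basis_prod_def sum.reindex)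
qed

lemma lap_FF:
  fixes p :: "'a::euclidean_space \<times> 'b::euclidean_space"
  assumes "fst p \<noteq> 0"
  shows "eucl_laplacian (FF r a b) p
     = r * (a \<bullet> fst p) * (b \<bullet> snd p) * (1 - real DIM('a)) / norm (fst p) ^ 3"
proof -
  let ?y = "fst p" and ?z = "snd p" and ?N = "norm (fst p)"
  have "eucl_laplacian (FF r a b) p = (\<Sum>e\<in>Basis. Fdd r a b p e e)"
    unfolding eucl_laplacian_def
  proof (rule sum.cong[OF refl])
    fix e :: "'a \<times> 'b"
    show "dd (\<lambda>q. dd (FF r a b) q e) p e = Fdd r a b p e e"
      by (rule dd2_deriv[OF openU, where f'="Fd r a b" and g="Fdd r a b p e"])
         (use assms FF_deriv Fd_deriv[OF assms] in auto)
  qed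
  also have "\<dots> = (\<Sum>i\<in>Basis. Fdd r a b p (i, 0) (i, 0)) + (\<Sum>j\<in>Basis. Fdd r a b p (0, j) (0, j))"
    by (rule sum_Basis_prod)
  also have "(\<Sum>j\<in>Basis. Fdd r a b p (0, j) (0, j)) = 0"
    by (simp add: Fdd_def)
  also have "(\<Sum>i\<in>Basis. Fdd r a b p (i, 0) (i, 0)) =
     (\<Sum>i\<in>Basis. (- 2 * r * (b \<bullet> ?z) / ?N ^ 3) * ((a \<bullet> i) * (?y \<bullet> i))
        + (- r * (a \<bullet> ?y) * (b \<bullet> ?z) / ?N ^ 3) * (i \<bullet> i)
        + (3 * r * (a \<bullet> ?y) * (b \<bullet> ?z) / ?N ^ 5) * ((?y \<bullet> i) * (?y \<bullet> i)))"
    using assms by (intro sum.cong[OF refl]) (simp add: Fdd_def field_simps inner_commute)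
  also have "\<dots> = (- 2 * r * (b \<bullet> ?z) / ?N ^ 3) * (\<Sum>i\<in>Basis. (a \<bullet> i) * (?y \<bullet> i))
        + (- r * (a \<bullet> ?y) * (b \<bullet> ?z) / ?N ^ 3) * (\<Sum>i\<in>(Basis::'a set). i \<bullet> i)
        + (3 * r * (a \<bullet> ?y) * (b \<bullet> ?z) / ?N ^ 5) * (\<Sum>i\<in>Basis. (?y \<bullet> i) * (?y \<bullet> i))"
    by (simp only: sum.distrib sum_distrib_left)
  also have "(\<Sum>i\<in>Basis. (a \<bullet> i) * (?y \<bullet> i)) = a \<bullet> ?y" by (rule euclidean_inner[symmetric])
  also have "(\<Sum>i\<in>Basis. (?y \<bullet> i) * (?y \<bullet> i)) = ?y \<bullet> ?y" by (rule euclidean_inner[symmetric])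
  also have "(\<Sum>i\<in>(Basis::'a set). i \<bullet> i) = real DIM('a)" by simp
  also have "?y \<bullet> ?y = ?N ^ 2" by (simp add: power2_norm_eq_inner)
  finally show ?thesis using assms by (simp add: field_simps eval_nat_numeral)
qed

lemma normal_deriv:
  fixes p :: "(real^'a::finite) \<times> (real^'b::finite)"
  assumes "fst p \<noteq> 0"
  shows "(shr_normal has_derivative (\<lambda>h. ((1 / norm (fst p)) *\<^sub>R fst h
      - ((fst p \<bullet> fst h) / norm (fst p) ^ 3) *\<^sub>R fst p, 0::real^'b))) (at p)"
proof -
  have e: "shr_normal = (\<lambda>q::(real^'a) \<times> (real^'b). ((1 / norm (fst q)) *\<^sub>R fst q, 0::real^'b))"
    by (auto simp: shr_normal_def fun_eq_iff)
  show ?thesis unfolding e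
    apply (rule derivative_eq_intros refl | simp add: assms)+
    using assms apply (auto simp: fun_eq_iff field_simps eval_nat_numeral)
    done
qed

lemma sqA_val:
  fixes p :: "(real^'a::finite) \<times> (real^'b::finite)"
  assumes "fst p \<noteq> 0"
  shows "sqA p = (real CARD('a) - 1) / norm (fst p) ^ 2"
proof -
  let ?y = "fst p" and ?N = "norm (fst p)"
  have N: "?N \<noteq> 0" using assms by simp
  have fd: "frechet_derivative shr_normal (at p) = (\<lambda>h. ((1 / norm (fst p)) *\<^sub>R fst h
      - ((fst p \<bullet> fst h) / norm (fst p) ^ 3) *\<^sub>R fst p, 0::real^'b))"
    using frechet_derivative_at[OF normal_deriv[OF assms]] by simp
  have "sqA p = (\<Sum>i\<in>Basis. (norm ((1 / ?N) *\<^sub>R i - ((?y \<bullet> i) / ?N ^ 3) *\<^sub>R ?y))\<^sup>2)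
     + (\<Sum>j\<in>(Basis::(real^'b) set). 0)"
    unfolding sqA_def fd by (subst sum_Basis_prod) simp
  also have "\<dots> = (\<Sum>i\<in>Basis. (1 / ?N ^ 2) * (i \<bullet> i) - (1 / ?N ^ 4) * ((?y \<bullet> i) * (?y \<bullet> i)))"
  proof -
    have "(norm ((1 / ?N) *\<^sub>R i - ((?y \<bullet> i) / ?N ^ 3) *\<^sub>R ?y))\<^sup>2
       = (1 / ?N ^ 2) * (i \<bullet> i) - (1 / ?N ^ 4) * ((?y \<bullet> i) * (?y \<bullet> i))" for i
    proof -
      have yy: "?y \<bullet> ?y = ?N * ?N" by (simp add: power2_norm_eq_inner[symmetric] power2_eq_square)
      show ?thesis
        unfolding power2_norm_eq_inner inner_diff_left inner_diff_right inner_scaleR_left inner_scaleR_right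
        using N by (simp add: yy field_simps inner_commute eval_nat_numeral)
    qed
    then show ?thesis by simp
  qed
  also have "\<dots> = (1 / ?N ^ 2) * (\<Sum>i\<in>(Basis::(real^'a) set). i \<bullet> i)
      - (1 / ?N ^ 4) * (\<Sum>i\<in>Basis. (?y \<bullet> i) * (?y \<bullet> i))"
    by (simp only: sum_subtractf sum_distrib_left)
  also have "(\<Sum>i\<in>Basis. (?y \<bullet> i) * (?y \<bullet> i)) = ?y \<bullet> ?y" by (rule euclidean_inner[symmetric])
  also have "(\<Sum>i\<in>(Basis::(real^'a) set). i \<bullet> i) = real CARD('a)" by simp
  also have "?y \<bullet> ?y = ?N ^ 2" by (simp add: power2_norm_eq_inner)
  finally show ?thesis using N by (simp add: field_simps eval_nat_numeral)
qed

theorem proposition4p3: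
  fixes a :: "real^'a::finite" and b :: "real^'b::finite"
  assumes "CARD('a) \<ge> 2"
    and "a \<noteq> 0" and "b \<noteq> 0"
  shows "stable_region
           {(y, z). (y, z) \<in> (Sigma :: ((real^'a) \<times> (real^'b)) set) \<and> a \<bullet> y > 0 \<and> b \<bullet> z > 0}"
proof -
  define r where "r = shr_radius TYPE('a)"
  define k where "k = real CARD('a) - 1"
  have k1: "k \<ge> 1" using assms(1) unfolding k_def by simp
  have r2: "r ^ 2 = 2 * k"
    unfolding r_def k_def shr_radius_def shr_k_def using assms(1) by (simp add: of_nat_diff)
  have rpos: "r > 0" unfolding r_def shr_radius_def shr_k_def using assms(1) by simp
  define u where "u = (\<lambda>(y::real^'a, z::real^'b). (a \<bullet> y) * (b \<bullet> z))"
  have hu: "hext u = FF r a b"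
    by (auto simp: hext_def u_def FF_def fun_eq_iff r_def)
  let ?\<Omega> = "{(y, z). (y, z) \<in> (Sigma :: ((real^'a) \<times> (real^'b)) set) \<and> a \<bullet> y > 0 \<and> b \<bullet> z > 0}"
  have td: "twice_diff_on (normal_nbhd ?\<Omega>) (hext u)"
    unfolding twice_diff_on_def hu
  proof safe
    fix p assume "p \<in> normal_nbhd ?\<Omega>"
    then have p0: "fst p \<noteq> 0" by (auto simp: normal_nbhd_def)
    show "FF r a b differentiable at p" using FF_deriv[OF p0] by (rule differentiableI)
  next
    fix v p assume "p \<in> normal_nbhd ?\<Omega>"
    then have p0: "fst p \<noteq> 0" by (auto simp: normal_nbhd_def)
    have "((\<lambda>q. frechet_derivative (FF r a b) (at q) v) has_derivative Fdd r a b p v) (at p)"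
      by (rule has_derivative_transform_within_open[OF Fd_deriv[OF p0] openU])
         (use p0 in \<open>auto simp: frechet_derivative_at[OF FF_deriv]\<close>)
    then show "(\<lambda>q. frechet_derivative (FF r a b) (at q) v) differentiable at p"
      by (rule differentiableI)
  qed
  have "stab_op u p = 0 \<and> u p > 0" if "p \<in> ?\<Omega>" for p
  proof -
    obtain y z where p: "p = (y, z)" by fastforce
    have ny: "norm y = r" and A: "a \<bullet> y > 0" and B: "b \<bullet> z > 0"
      using that by (auto simp: p Sigma_def r_def)
    have y0: "fst p \<noteq> 0" using ny rpos p by auto
    have lap: "eucl_laplacian (FF r a b) p = r * (a \<bullet> y) * (b \<bullet> z) * (1 - (k + 1)) / r ^ 3"
      using lap_FF[OF y0, of r a b] by (simp add: p ny k_def)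
    have ddp: "dd (FF r a b) p p = Fd r a b p p" by (rule dd_deriv[OF FF_deriv[OF y0]])
    have sq: "sqA p = k / r ^ 2" using sqA_val[OF y0] by (simp add: p ny k_def)
    have yy: "y \<bullet> y = r * r" using ny by (simp add: power2_norm_eq_inner[symmetric] power2_eq_square)
    have "stab_op u p = r * (a \<bullet> y) * (b \<bullet> z) * (1 - (k + 1)) / r ^ 3
        - 1/2 * (r * ((a \<bullet> y) * (b \<bullet> z) / r + (a \<bullet> y) * (b \<bullet> z) / r - (a \<bullet> y) * (b \<bullet> z) * (r * r) / r ^ 3))
        + (k / r ^ 2 + 1/2) * ((a \<bullet> y) * (b \<bullet> z))"
      unfolding stab_op_def hu lap ddp sq by (simp add: Fd_def p ny yy u_def)
    also have "\<dots> = 0" using rpos r2 k1 by (simp add: field_simps eval_nat_numeral)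
    finally show ?thesis using A B by (simp add: p u_def)
  qed
  then show ?thesis unfolding stable_region_def using td by blast
qed

end
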